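(* Let $R$ be a ring with identity and involution $*$, and let $a\in R$. The following conditions are equivalent: (1) $a$ is core invertible; (2) $R = aR \oplus (a^* )^{\circ}$ and $R = aR \oplus a^{\circ}$; (3) $R = aR + (a^* )^{\circ}$ and $R = aR \oplus a^{\circ}$; (4) $R = Ra^* \oplus {}^{\circ}a$ and $R = aR \oplus a^{\circ}$; (5) $R = Ra^* + {}^{\circ}a$ and $R = aR \oplus a^{\circ}$; (6) $R = aR \oplus (a^* )^{\circ}$ and $R = Ra \oplus {}^{\circ}a$; (7) $R = aR + (a^* )^{\circ}$ and $R = Ra \oplus {}^{\circ}a$; (8) $R = Ra^* \oplus {}^{\circ}a$ and $R = Ra \oplus {}^{\circ}a$; (9) $R = Ra^* + {}^{\circ}a$ and $R = Ra \oplus {}^{\circ}a$. In this case, $$a^{\oplus} = a y_1^2 a x_1 = a y_1^2 a x_2^* = y_2 a x_1 = y_2 a x_2^*,$$ where $x_1,x_2,y_1,y_2\in R$ are any elements with $1 = ax_1 + u_1 = x_2 a^* + u_2 = a y_1 + v_1 = y_2 a + v_2$ for some $u_1 \in (a^* )^{\circ}$, $v_1 \in a^{\circ}$ and $u_2, v_2 \in {}^{\circ}a$.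
   Context: An involution on $R$ satisfies $(a^* )^*=a$, $(ab)^*=b^*a^*$, $(a+b)^*=a^*+b^*$. An element $x\in R$ is a core inverse of $a$ if $axa=a$, $xR=aR$ and $Rx=Ra^*$; it is unique, denoted $a^{\oplus}$, and $a$ is then core invertible. For $c\in R$: $cR=\{cx: x\in R\}$, $Rc=\{xc:x\in R\}$, $c^{\circ}=\{x\in R: cx=0\}$ (right annihilator), ${}^{\circ}c=\{x\in R: xc=0\}$ (left annihilator). "$R = A \oplus B$" means $R=A+B$ with $A\cap B=\{0\}$. *)

theory Defs
  imports Main
begin

text \<open>A ring with identity is modelled by the type class ring_1 (not necessarily
commutative); the involution is an explicit function s.\<close>

definition involution :: "('a::ring_1 \<Rightarrow> 'a) \<Rightarrow> bool" where
  "involution s \<longleftrightarrow> (\<forall>a. s (s a) = a) \<and> (\<forall>a b. s (a * b) = s b * s a)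
     \<and> (\<forall>a b. s (a + b) = s a + s b)"

definition rideal :: "'a::ring_1 \<Rightarrow> 'a set" where
  "rideal c = {c * x | x. True}"

definition lideal :: "'a::ring_1 \<Rightarrow> 'a set" where
  "lideal c = {x * c | x. True}"

definition rann :: "'a::ring_1 \<Rightarrow> 'a set" where
  "rann c = {x. c * x = 0}"

definition lann :: "'a::ring_1 \<Rightarrow> 'a set" where
  "lann c = {x. x * c = 0}"

definition sum_whole :: "'a::ring_1 set \<Rightarrow> 'a set \<Rightarrow> bool" where
  "sum_whole A B \<longleftrightarrow> (\<forall>r. \<exists>x\<in>A. \<exists>y\<in>B. r = x + y)"

definition dsum_whole :: "'a::ring_1 set \<Rightarrow> 'a set \<Rightarrow> bool" where
  "dsum_whole A B \<longleftrightarrow> sum_whole A B \<and> A \<inter> B = {0}"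

definition is_core_inverse :: "('a::ring_1 \<Rightarrow> 'a) \<Rightarrow> 'a \<Rightarrow> 'a \<Rightarrow> bool" where
  "is_core_inverse s a x \<longleftrightarrow> a * x * a = a \<and> rideal x = rideal a \<and> lideal x = lideal (s a)"

definition core_invertible :: "('a::ring_1 \<Rightarrow> 'a) \<Rightarrow> 'a \<Rightarrow> bool" where
  "core_invertible s a \<longleftrightarrow> (\<exists>x. is_core_inverse s a x)"

definition core_inv :: "('a::ring_1 \<Rightarrow> 'a) \<Rightarrow> 'a \<Rightarrow> 'a" where
  "core_inv s a = (THE x. is_core_inverse s a x)"

end

theory Submission imports Defs begin

lemma invD:
  assumes "involution s"
  shows "s (s a) = a" "s (a*b) = s b * s a" "s (a+b) = s a + s b" "s 0 = 0" "s (a - b) = s a - s b"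
proof -
  show 1: "s (s a) = a" using assms by (simp add: involution_def)
  show "s (a*b) = s b * s a" using assms by (simp add: involution_def)
  have add: "\<And>x y. s (x+y) = s x + s y" using assms by (simp add: involution_def)
  then show "s (a+b) = s a + s b" .
  have "s 0 = s 0 + s 0" using add[of 0 0] by simp
  then show z: "s 0 = 0" by simp
  have "s (a - b) + s b = s a" using add[of "a-b" b] by simp
  then show "s (a - b) = s a - s b" by (simp add: eq_diff_eq)
qed

lemma grp1:
  fixes a y v :: "'a::ring_1"
  assumes e: "1 = a*y + v" and v: "a*v = 0" and I: "\<forall>z. z \<in> rideal a \<and> z \<in> rann a \<longrightarrow> z = 0"
  shows "a*(a*y^2)*a = a \<and> (a*y^2)*a*(a*y^2) = a*y^2 \<and> a*(a*y^2) = (a*y^2)*a"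
proof -
  have h1: "a*(a*y) = a"
  proof -
    have "a = a*(a*y+v)" using e by (metis mult_1_right)
    then show ?thesis by (simp add: distrib_left v)
  qed
  have h2: "a*(y*a) = a"
  proof -
    have m1: "a - a*(y*a) \<in> rideal a" unfolding rideal_def
      by (rule CollectI, rule exI[of _ "1 - y*a"]) (simp add: right_diff_distrib)
    have "a*(a*(y*a)) = (a*(a*y))*a" by (simp add: mult.assoc)
    then have "a*(a - a*(y*a)) = 0" by (simp add: right_diff_distrib h1)
    then have "a - a*(y*a) \<in> rann a" by (simp add: rann_def)
    with m1 I show ?thesis by auto
  qed
  have h3: "a*(y*(y*a)) = a*y"
  proof -
    have m1: "a*(y*(y*a)) - a*y \<in> rideal a" unfolding rideal_def
      by (rule CollectI, rule exI[of _ "y*(y*a) - y"]) (simp add: right_diff_distrib)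
    have "a*(a*(y*(y*a))) = (a*(a*y))*(y*a)" by (simp add: mult.assoc)
    also have "\<dots> = a" by (simp add: h1 h2)
    finally have "a*(a*(y*(y*a)) - a*y) = 0" by (simp add: right_diff_distrib h1)
    then have "a*(y*(y*a)) - a*y \<in> rann a" by (simp add: rann_def)
    with m1 I show ?thesis by auto
  qed
  have ag: "a*(a*y^2) = a*y" by (metis h1 mult.assoc power2_eq_square)
  have ga: "(a*y^2)*a = a*y" using h3 by (simp add: power2_eq_square mult.assoc)
  show ?thesis using ag ga h2 by (simp add: mult.assoc[symmetric])
qed


lemma grp2:
  fixes a y v :: "'a::ring_1"
  assumes e: "1 = y*a + v" and v: "v*a = 0" and I: "\<forall>z. z \<in> lideal a \<and> z \<in> lann a \<longrightarrow> z = 0"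
  shows "a*(y^2*a)*a = a \<and> (y^2*a)*a*(y^2*a) = y^2*a \<and> a*(y^2*a) = (y^2*a)*a"
proof -
  have h1: "y*(a*a) = a"
  proof -
    have "a = (y*a+v)*a" using e by (metis mult_1_left)
    then show ?thesis by (simp add: distrib_right v mult.assoc)
  qed
  have h2: "a*(y*a) = a"
  proof -
    have m1: "a - a*(y*a) \<in> lideal a" unfolding lideal_def
      by (rule CollectI, rule exI[of _ "1 - a*y"]) (simp add: left_diff_distrib mult.assoc)
    have "a*(y*a)*a = a*(y*(a*a))" by (simp add: mult.assoc)
    then have "(a - a*(y*a))*a = 0" by (simp add: left_diff_distrib h1)
    then have "a - a*(y*a) \<in> lann a" by (simp add: lann_def)
    with m1 I show ?thesis by auto
  qed
  have h3: "a*(y*(y*a)) = y*a"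
  proof -
    have m1: "a*(y*(y*a)) - y*a \<in> lideal a" unfolding lideal_def
      by (rule CollectI, rule exI[of _ "a*(y*y) - y"]) (simp add: left_diff_distrib mult.assoc)
    have "a*(y*(y*a))*a = (a*y)*(y*(a*a))" by (simp add: mult.assoc)
    also have "\<dots> = a" by (simp add: h1 mult.assoc h2)
    finally have "(a*(y*(y*a)) - y*a)*a = 0" by (simp add: left_diff_distrib h1 mult.assoc)
    then have "a*(y*(y*a)) - y*a \<in> lann a" by (simp add: lann_def)
    with m1 I show ?thesis by auto
  qed
  have ga: "(y^2*a)*a = y*a" by (metis h1 mult.assoc power2_eq_square)
  have ag: "a*(y^2*a) = y*a" using h3 by (simp add: power2_eq_square mult.assoc)
  have "(y^2*a)*a*(y^2*a) = y*(a*(y^2*a))" using ga by (metis mult.assoc)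
  also have "\<dots> = y^2*a" using ag by (simp add: power2_eq_square mult.assoc)
  finally show ?thesis using ag ga h2 h1 by (simp add: mult.assoc[symmetric])
qed

lemma core_mk:
  fixes a g x :: "'a::ring_1"
  assumes inv: "involution s"
    and g: "a*g*a = a" "g*a*g = g" "a*g = g*a" and x: "s a = s a * a * x"
  shows "is_core_inverse s a (g*a*x)"
proof -
  note S = invD[OF inv]
  have xa: "a = s x * s a * a"
  proof -
    have "a = s (s a)" using S by simp
    also have "\<dots> = s (s a * a * x)" using x by simp
    finally show ?thesis using S by (simp add: mult.assoc)
  qed
  have herm: "s (a*x) = a*x"
  proof -
    have "a*x = s x * (s a * a * x)" using xa by (metis mult.assoc)
    also have "\<dots> = s x * s a" using x by simp
    finally show ?thesis using S by simp
  qed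
  have axa: "a*x*a = a"
  proof -
    have "a*x*a = s (a*x) * a" using herm by simp
    also have "\<dots> = a" using xa S by (simp add: mult.assoc)
    finally show ?thesis .
  qed
  have c1: "a*(g*a*x)*a = a" using g axa by (metis mult.assoc)
  have r1: "g*a*x = a*(g*x)" using g(3) by (metis mult.assoc)
  have r2: "a = (g*a*x)*(a*a)"
  proof -
    have "(g*a*x)*(a*a) = g*(a*x*a)*a" by (simp add: mult.assoc)
    also have "\<dots> = a" using axa g by (metis mult.assoc)
    finally show ?thesis by simp
  qed
  have l1: "g*a*x = (g * s x) * s a"
  proof -
    have "g*a*x = g*(s (a*x))" using herm by (simp add: mult.assoc)
    then show ?thesis using S by (simp add: mult.assoc)
  qed
  have l2: "s a = (s a * a) * (g*a*x)"
  proof -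
    have "a*(g*a*x) = a*x" using g by (metis mult.assoc)
    then show ?thesis using x by (metis mult.assoc)
  qed
  have R: "rideal (g*a*x) = rideal a"
    unfolding rideal_def
    using r1 r2 by (auto simp: mult.assoc) (metis mult.assoc)+
  have L: "lideal (g*a*x) = lideal (s a)"
    unfolding lideal_def
    using l1 l2 by (auto simp: mult.assoc[symmetric]) (metis mult.assoc)+
  show ?thesis unfolding is_core_inverse_def using c1 R L by simp
qed


lemma ci_props:
  fixes a x :: "'a::ring_1"
  assumes inv: "involution s" and c: "is_core_inverse s a x"
  shows "a*x*a = a" "x*a*x = x" "s (a*x) = a*x" "x*a*a = a" "a*x*x = x"
proof -
  note S = invD[OF inv]
  have axa: "a*x*a = a" using c by (simp add: is_core_inverse_def)
  have "x \<in> rideal x" unfolding rideal_def by (rule CollectI, rule exI[of _ 1]) simp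
  then obtain r where r: "x = a*r" using c by (auto simp: is_core_inverse_def rideal_def)
  have "a \<in> rideal a" unfolding rideal_def by (rule CollectI, rule exI[of _ 1]) simp
  then obtain t where t: "a = x*t" using c by (auto simp: is_core_inverse_def rideal_def)
  have "x \<in> lideal x" unfolding lideal_def by (rule CollectI, rule exI[of _ 1]) simp
  then have "x \<in> lideal (s a)" using c by (simp add: is_core_inverse_def)
  then obtain q where q: "x = q * s a" by (auto simp: lideal_def)
  show "a*x*a = a" by (rule axa)
  show axx: "a*x*x = x" using r axa by (metis mult.assoc)
  have sa: "s a * s x * s a = s a"
  proof -
    have "s (a*x*a) = s a * s x * s a" using S by (simp add: mult.assoc)
    then show ?thesis using axa by simp
  qed
  have x1: "x * s (a*x) = x"
  proof -
    have "x * s (a*x) = q * (s a * s x * s a)" using q S by (simp add: mult.assoc)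
    then show ?thesis using sa q by simp
  qed
  have e: "a*x = (a*x) * s (a*x)" using x1 by (metis mult.assoc)
  have herm: "s (a*x) = a*x"
  proof -
    have "s (a*x) = s (s (a*x)) * s (a*x)" using e S by metis
    also have "\<dots> = a*x" using S e by simp
    finally show ?thesis .
  qed
  show "s (a*x) = a*x" by (rule herm)
  show xax: "x*a*x = x" using x1 herm by (simp add: mult.assoc)
  show "x*a*a = a" using xax t by (metis mult.assoc)
qed

lemma ci_unique:
  assumes inv: "involution s" and c1: "is_core_inverse s a x" and c2: "is_core_inverse s a y"
  shows "x = y"
proof -
  note S = invD[OF inv]
  note X = ci_props[OF inv c1] and Y = ci_props[OF inv c2]
  have "x = x * s (a*x)" using X by (metis mult.assoc)
  also have "\<dots> = x * s (a*x) * s (a*y)"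
  proof -
    have "s a = s (a*y*a)" using Y by simp
    also have "\<dots> = s a * s (a*y)" using S by simp
    finally have "s a = s a * s (a*y)" .
    moreover have "s (a*x) = s x * s a" by (rule S(2))
    ultimately show ?thesis by (metis mult.assoc)
  qed
  also have "\<dots> = x*a*y" using X Y by (metis mult.assoc)
  also have "\<dots> = (x*a*a)*y*y" using Y by (metis mult.assoc)
  also have "\<dots> = y" using X Y by (metis mult.assoc)
  finally show ?thesis .
qed

lemma core_inv_eq:
  assumes inv: "involution s" and c: "is_core_inverse s a x"
  shows "core_inv s a = x"
  unfolding core_inv_def by (metis the_equality ci_unique[OF inv] c)


lemma grp_dsum:
  fixes a g :: "'a::ring_1"
  assumes g: "a*g*a = a" "g*a*g = g" "a*g = g*a"
  shows "dsum_whole (rideal a) (rann a) \<and> dsum_whole (lideal a) (lann a)"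
proof -
  have s1: "sum_whole (rideal a) (rann a)" unfolding sum_whole_def
  proof
    fix r :: 'a
    have m1: "a*(g*r) \<in> rideal a" by (auto simp: rideal_def)
    have "a*(a*(g*r)) = a*r" using g by (metis mult.assoc)
    then have m2: "r - a*(g*r) \<in> rann a" by (simp add: rann_def right_diff_distrib)
    show "\<exists>x\<in>rideal a. \<exists>y\<in>rann a. r = x + y" using m1 m2 by force
  qed
  have i1: "rideal a \<inter> rann a = {0}"
  proof (rule set_eqI, rule iffI)
    fix z assume "z \<in> rideal a \<inter> rann a"
    then obtain t where t: "z = a*t" and z: "a*z = 0" by (auto simp: rideal_def rann_def)
    have "z = (a*g*a)*t" using t g by simp
    also have "\<dots> = g*(a*z)" using g(3) t by (metis mult.assoc)
    finally show "z \<in> {0}" using z by simp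
  next
    fix z assume "z \<in> {0::'a}"
    then show "z \<in> rideal a \<inter> rann a" by (auto simp: rideal_def rann_def intro: exI[of _ 0])
  qed
  have s2: "sum_whole (lideal a) (lann a)" unfolding sum_whole_def
  proof
    fix r :: 'a
    have m1: "(r*g)*a \<in> lideal a" by (auto simp: lideal_def)
    have "(r*g)*a*a = r*a" using g by (metis mult.assoc)
    then have m2: "r - (r*g)*a \<in> lann a" by (simp add: lann_def left_diff_distrib)
    show "\<exists>x\<in>lideal a. \<exists>y\<in>lann a. r = x + y" using m1 m2 by force
  qed
  have i2: "lideal a \<inter> lann a = {0}"
  proof (rule set_eqI, rule iffI)
    fix z assume "z \<in> lideal a \<inter> lann a"
    then obtain t where t: "z = t*a" and z: "z*a = 0" by (auto simp: lideal_def lann_def)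
    have "z = t*(a*g*a)" using t g by simp
    also have "\<dots> = (z*a)*g" using g(3) t by (metis mult.assoc)
    finally show "z \<in> {0}" using z by simp
  next
    fix z assume "z \<in> {0::'a}"
    then show "z \<in> lideal a \<inter> lann a" by (auto simp: lideal_def lann_def intro: exI[of _ 0])
  qed
  show ?thesis using s1 s2 i1 i2 by (simp add: dsum_whole_def)
qed

lemma ci_dsum:
  fixes a x :: "'a::ring_1"
  assumes inv: "involution s" and c: "is_core_inverse s a x"
  shows "dsum_whole (rideal a) (rann (s a)) \<and> dsum_whole (lideal (s a)) (lann a)"
proof -
  note S = invD[OF inv]
  note X = ci_props[OF inv c]
  have sax: "s a * (a*x) = s a"
  proof -
    have "s a * (a*x) = s a * s (a*x)" using X by simp
    also have "\<dots> = s (a*x*a)" using S by (simp add: mult.assoc)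
    finally show ?thesis using X by simp
  qed
  have xsa: "s x * (s a * a) = a"
  proof -
    have "s x * (s a * a) = s (a*x) * a" using S by (simp add: mult.assoc)
    then show ?thesis using X by simp
  qed
  have s1: "sum_whole (rideal a) (rann (s a))" unfolding sum_whole_def
  proof
    fix r :: 'a
    have m1: "a*(x*r) \<in> rideal a" by (auto simp: rideal_def)
    have "s a*(r - a*(x*r)) = s a*r - (s a*(a*x))*r" by (simp add: right_diff_distrib mult.assoc)
    then have m2: "r - a*(x*r) \<in> rann (s a)" using sax by (simp add: rann_def)
    show "\<exists>x\<in>rideal a. \<exists>y\<in>rann (s a). r = x + y" using m1 m2 by force
  qed
  have i1: "rideal a \<inter> rann (s a) = {0}"
  proof (rule set_eqI, rule iffI)
    fix z assume "z \<in> rideal a \<inter> rann (s a)"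
    then obtain t where t: "z = a*t" and z: "s a*z = 0" by (auto simp: rideal_def rann_def)
    have "z = (a*x*a)*t" using t X(1) by metis
    also have "\<dots> = s (a*x) * (a*t)" using X(3) by (metis mult.assoc)
    also have "\<dots> = s x * (s a * z)" using S t by (simp add: mult.assoc)
    finally show "z \<in> {0}" using z by simp
  next
    fix z assume "z \<in> {0::'a}"
    then show "z \<in> rideal a \<inter> rann (s a)" by (auto simp: rideal_def rann_def intro: exI[of _ 0] S)
  qed
  have s2: "sum_whole (lideal (s a)) (lann a)" unfolding sum_whole_def
  proof
    fix r :: 'a
    have m1: "(r*s x)*s a \<in> lideal (s a)" by (auto simp: lideal_def)
    have "(r - (r*s x)*s a)*a = r*a - r*(s x*(s a*a))" by (simp add: left_diff_distrib mult.assoc)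
    then have m2: "r - (r*s x)*s a \<in> lann a" using xsa by (simp add: lann_def)
    show "\<exists>x\<in>lideal (s a). \<exists>y\<in>lann a. r = x + y" using m1 m2 by force
  qed
  have i2: "lideal (s a) \<inter> lann a = {0}"
  proof (rule set_eqI, rule iffI)
    fix z assume "z \<in> lideal (s a) \<inter> lann a"
    then obtain t where t: "z = t*s a" and z: "z*a = 0" by (auto simp: lideal_def lann_def)
    have "z = t*(s a*(a*x))" using t sax by simp
    also have "\<dots> = (z*a)*x" using t by (simp add: mult.assoc)
    finally show "z \<in> {0}" using z by simp
  next
    fix z assume "z \<in> {0::'a}"
    then show "z \<in> lideal (s a) \<inter> lann a" by (auto simp: lideal_def lann_def intro: exI[of _ 0])
  qed
  show ?thesis using s1 s2 i1 i2 by (simp add: dsum_whole_def)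
qed


lemma H1:
  fixes a t u :: "'a::ring_1"
  assumes "1 = a*t + u" "u \<in> rann (s a)"
  shows "s a = s a * a * t"
proof -
  have "s a = s a * (a*t + u)" using assms(1) by (metis mult_1_right)
  then show ?thesis using assms(2) by (simp add: rann_def distrib_left mult.assoc)
qed

lemma H2:
  fixes a t u :: "'a::ring_1"
  assumes inv: "involution s" and "1 = t * s a + u" "u \<in> lann a"
  shows "s a = s a * a * s t"
proof -
  note S = invD[OF inv]
  have "a = (t * s a + u)*a" using assms(2) by (metis mult_1_left)
  then have "a = t * s a * a" using assms(3) by (simp add: lann_def distrib_right mult.assoc)
  then have "s a = s (t * s a * a)" by simp
  also have "\<dots> = s a * a * s t" using S by (simp add: mult.assoc)
  finally show ?thesis .
qed

lemma ci_grp: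
  fixes a x :: "'a::ring_1"
  assumes inv: "involution s" and c: "is_core_inverse s a x"
  shows "a*(x*x*a)*a = a \<and> (x*x*a)*a*(x*x*a) = x*x*a \<and> a*(x*x*a) = (x*x*a)*a"
proof -
  note X = ci_props[OF inv c]
  have 1: "a*(x*x*a)*a = a" using X by (metis mult.assoc)
  have 2: "(x*x*a)*a*(x*x*a) = x*x*a" using X by (metis mult.assoc)
  have 3: "a*(x*x*a) = (x*x*a)*a" using X by (metis mult.assoc)
  show ?thesis using 1 2 3 by blast
qed

theorem proposition2p11:
  fixes s :: "'a::ring_1 \<Rightarrow> 'a" and a :: 'a
  assumes inv: "involution s"
  shows
   "(core_invertible s a \<longleftrightarrow> dsum_whole (rideal a) (rann (s a)) \<and> dsum_whole (rideal a) (rann a))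
  \<and> (core_invertible s a \<longleftrightarrow> sum_whole (rideal a) (rann (s a)) \<and> dsum_whole (rideal a) (rann a))
  \<and> (core_invertible s a \<longleftrightarrow> dsum_whole (lideal (s a)) (lann a) \<and> dsum_whole (rideal a) (rann a))
  \<and> (core_invertible s a \<longleftrightarrow> sum_whole (lideal (s a)) (lann a) \<and> dsum_whole (rideal a) (rann a))
  \<and> (core_invertible s a \<longleftrightarrow> dsum_whole (rideal a) (rann (s a)) \<and> dsum_whole (lideal a) (lann a))
  \<and> (core_invertible s a \<longleftrightarrow> sum_whole (rideal a) (rann (s a)) \<and> dsum_whole (lideal a) (lann a))
  \<and> (core_invertible s a \<longleftrightarrow> dsum_whole (lideal (s a)) (lann a) \<and> dsum_whole (lideal a) (lann a))
  \<and> (core_invertible s a \<longleftrightarrow> sum_whole (lideal (s a)) (lann a) \<and> dsum_whole (lideal a) (lann a))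
  \<and> (core_invertible s a \<longrightarrow>
      (\<forall>x1 x2 y1 y2 u1 u2 v1 v2.
         u1 \<in> rann (s a) \<and> v1 \<in> rann a \<and> u2 \<in> lann a \<and> v2 \<in> lann a \<and>
         1 = a * x1 + u1 \<and> 1 = x2 * s a + u2 \<and> 1 = a * y1 + v1 \<and> 1 = y2 * a + v2
         \<longrightarrow> core_inv s a = a * y1^2 * a * x1
           \<and> core_inv s a = a * y1^2 * a * s x2
           \<and> core_inv s a = y2 * a * x1
           \<and> core_inv s a = y2 * a * s x2))"
proof -
  note S = invD[OF inv]
  let ?CI = "core_invertible s a"
  let ?D1 = "dsum_whole (rideal a) (rann (s a))"
  let ?S1 = "sum_whole (rideal a) (rann (s a))"
  let ?D2 = "dsum_whole (lideal (s a)) (lann a)"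
  let ?S2 = "sum_whole (lideal (s a)) (lann a)"
  let ?G1 = "dsum_whole (rideal a) (rann a)"
  let ?G2 = "dsum_whole (lideal a) (lann a)"
  have fwd: "?CI \<Longrightarrow> ?D1 \<and> ?D2 \<and> ?G1 \<and> ?G2"
  proof -
    assume "?CI"
    then obtain x where c: "is_core_inverse s a x" by (auto simp: core_invertible_def)
    have g: "a*(x*x*a)*a = a" "(x*x*a)*a*(x*x*a) = x*x*a" "a*(x*x*a) = (x*x*a)*a"
      using ci_grp[OF inv c] by auto
    show ?thesis using ci_dsum[OF inv c] grp_dsum[OF g] by blast
  qed
  have ds1: "?D1 \<Longrightarrow> ?S1" by (simp add: dsum_whole_def)
  have ds2: "?D2 \<Longrightarrow> ?S2" by (simp add: dsum_whole_def)
  have hS1: "?S1 \<Longrightarrow> \<exists>t. s a = s a * a * t"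
  proof -
    assume "?S1"
    then obtain p u where "p \<in> rideal a" "u \<in> rann (s a)" "1 = p + u"
      unfolding sum_whole_def by blast
    then obtain t where "1 = a*t + u" "u \<in> rann (s a)" by (auto simp: rideal_def)
    then show ?thesis using H1 by blast
  qed
  have hS2: "?S2 \<Longrightarrow> \<exists>t. s a = s a * a * t"
  proof -
    assume "?S2"
    then obtain p u where "p \<in> lideal (s a)" "u \<in> lann a" "1 = p + u"
      unfolding sum_whole_def by blast
    then obtain t where "1 = t * s a + u" "u \<in> lann a" by (auto simp: lideal_def)
    then show ?thesis using H2[OF inv] by blast
  qed
  have I1: "?G1 \<Longrightarrow> \<forall>z. z \<in> rideal a \<and> z \<in> rann a \<longrightarrow> z = 0"
    by (auto simp: dsum_whole_def)
  have I2: "?G2 \<Longrightarrow> \<forall>z. z \<in> lideal a \<and> z \<in> lann a \<longrightarrow> z = 0"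
    by (auto simp: dsum_whole_def)
  have gG1: "?G1 \<Longrightarrow> \<exists>g. a*g*a = a \<and> g*a*g = g \<and> a*g = g*a"
  proof -
    assume G: "?G1"
    then obtain p v where "p \<in> rideal a" "v \<in> rann a" "1 = p + v"
      unfolding dsum_whole_def sum_whole_def by blast
    then obtain y where "1 = a*y + v" "a*v = 0" by (auto simp: rideal_def rann_def)
    from grp1[OF this I1[OF G]] show ?thesis by blast
  qed
  have gG2: "?G2 \<Longrightarrow> \<exists>g. a*g*a = a \<and> g*a*g = g \<and> a*g = g*a"
  proof -
    assume G: "?G2"
    then obtain p v where "p \<in> lideal a" "v \<in> lann a" "1 = p + v"
      unfolding dsum_whole_def sum_whole_def by blast
    then obtain y where "1 = y*a + v" "v*a = 0" by (auto simp: lideal_def lann_def)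
    from grp2[OF this I2[OF G]] show ?thesis by blast
  qed
  have bwd: "(\<exists>t. s a = s a * a * t) \<Longrightarrow> (\<exists>g. a*g*a = a \<and> g*a*g = g \<and> a*g = g*a) \<Longrightarrow> ?CI"
  proof -
    assume "\<exists>t. s a = s a * a * t" "\<exists>g. a*g*a = a \<and> g*a*g = g \<and> a*g = g*a"
    then obtain t g where t: "s a = s a * a * t" and g: "a*g*a = a" "g*a*g = g" "a*g = g*a" by blast
    show ?thesis using core_mk[OF inv g t] by (auto simp: core_invertible_def)
  qed
  have formulas: "?CI \<longrightarrow>
      (\<forall>x1 x2 y1 y2 u1 u2 v1 v2.
         u1 \<in> rann (s a) \<and> v1 \<in> rann a \<and> u2 \<in> lann a \<and> v2 \<in> lann a \<and>
         1 = a * x1 + u1 \<and> 1 = x2 * s a + u2 \<and> 1 = a * y1 + v1 \<and> 1 = y2 * a + v2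
         \<longrightarrow> core_inv s a = a * y1^2 * a * x1
           \<and> core_inv s a = a * y1^2 * a * s x2
           \<and> core_inv s a = y2 * a * x1
           \<and> core_inv s a = y2 * a * s x2)"
  proof (intro impI allI)
    fix x1 x2 y1 y2 u1 u2 v1 v2
    assume ci: ?CI and h: "u1 \<in> rann (s a) \<and> v1 \<in> rann a \<and> u2 \<in> lann a \<and> v2 \<in> lann a \<and>
         1 = a * x1 + u1 \<and> 1 = x2 * s a + u2 \<and> 1 = a * y1 + v1 \<and> 1 = y2 * a + v2"
    have F: ?G1 ?G2 using fwd[OF ci] by auto
    have t1: "s a = s a * a * x1" using H1 h by blast
    have t2: "s a = s a * a * s x2" using H2[OF inv] h by blast
    have "a*v1 = 0" "v2*a = 0" using h by (auto simp: rann_def lann_def)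
    have g1: "a*(a*y1^2)*a = a" "(a*y1^2)*a*(a*y1^2) = a*y1^2" "a*(a*y1^2) = (a*y1^2)*a"
      using grp1[where a=a and y=y1 and v=v1] h \<open>a*v1 = 0\<close> I1[OF F(1)] by auto
    have g2: "a*(y2^2*a)*a = a" "(y2^2*a)*a*(y2^2*a) = y2^2*a" "a*(y2^2*a) = (y2^2*a)*a"
      using grp2[where a=a and y=y2 and v=v2] h \<open>v2*a = 0\<close> I2[OF F(2)] by auto
    have ya: "y2*a*a = a"
    proof -
      have "a = (y2*a + v2)*a" using h by (metis mult_1_left)
      then show ?thesis using \<open>v2*a = 0\<close> by (simp add: distrib_right)
    qed
    have yy: "y2^2*a*a = y2*a" using ya by (simp add: power2_eq_square mult.assoc)
    have e1: "core_inv s a = a * y1^2 * a * x1" by (rule core_inv_eq[OF inv core_mk[OF inv g1 t1]])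
    have e2: "core_inv s a = a * y1^2 * a * s x2" by (rule core_inv_eq[OF inv core_mk[OF inv g1 t2]])
    have r: "\<And>z. y2^2*a*a*z = y2*a*z" using yy by simp
    have e3: "core_inv s a = y2 * a * x1" using core_inv_eq[OF inv core_mk[OF inv g2 t1]] r by simp
    have e4: "core_inv s a = y2 * a * s x2" using core_inv_eq[OF inv core_mk[OF inv g2 t2]] r by simp
    show "core_inv s a = a * y1^2 * a * x1
           \<and> core_inv s a = a * y1^2 * a * s x2
           \<and> core_inv s a = y2 * a * x1
           \<and> core_inv s a = y2 * a * s x2" using e1 e2 e3 e4 by blast
  qed
  show ?thesis
    using fwd ds1 ds2 hS1 hS2 gG1 gG2 bwd formulas by blast
qed

end
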